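(* Let $N=[n]$, let $v:2^N\to\mathbb{R}_+$ be a monotone submodular valuation with $v(\emptyset)=0$, and let $X$ be a decision map for $v$. Then in every pure Nash equilibrium $p$ of the pricing game defined by $v$ and $X$, the utility of each seller $i$ is $u_i(p)=v(\{i\}\mid N\setminus\{i\})$. In particular, for every pure Nash equilibrium $p$ and every $i$ with $v(\{i\}\mid N\setminus\{i\})>0$, we have $p_i=v(\{i\}\mid N\setminus\{i\})$ and $i\in X(p)$.
   Context: Pricing game: $N=[n]$ services, service $i$ controlled by seller $i$. Buyer valuation $v:2^N\to\mathbb{R}_+$, monotone, $v(\emptyset)=0$; submodular means $v(S\cup T)+v(S\cap T)\le v(S)+v(T)$ for all $S,T$. Marginal value: $v(T\mid S)=v(S\cup T)-v(S)$. For $p\in\mathbb{R}^n_+$, $p(S)=\sum_{j\in S}p_j$, $D(v;p)=\arg\max_{S\subseteq N}(v(S)-p(S))$. A decision map is $X:\mathbb{R}^n_+\to2^N$ with $X(p)\in D(v;p)$ for all $p$. Seller $i$'s utility is $u_i(p)=p_i\mathbf{1}\{i\in X(p)\}$; a pure Nash equilibrium is a $p$ with $u_i(p)\ge u_i(p_i',p_{-i})$ for all $i$ and $p_i'\in\mathbb{R}_+$. *)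

theory Defs
  imports "HOL-Analysis.Analysis"
begin

definition ground :: "nat \<Rightarrow> nat set" where
  "ground n = {1..n}"

definition monotone_val :: "nat \<Rightarrow> (nat set \<Rightarrow> real) \<Rightarrow> bool" where
  "monotone_val n v \<longleftrightarrow> (\<forall>S T. S \<subseteq> T \<and> T \<subseteq> ground n \<longrightarrow> v S \<le> v T)"

definition submodular_val :: "nat \<Rightarrow> (nat set \<Rightarrow> real) \<Rightarrow> bool" where
  "submodular_val n v \<longleftrightarrow> (\<forall>S T. S \<subseteq> ground n \<and> T \<subseteq> ground n \<longrightarrow>
      v (S \<union> T) + v (S \<inter> T) \<le> v S + v T)"

definition valuation :: "nat \<Rightarrow> (nat set \<Rightarrow> real) \<Rightarrow> bool" where
  "valuation n v \<longleftrightarrow> v {} = 0 \<and> (\<forall>S \<subseteq> ground n. v S \<ge> 0)"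

definition marginal :: "(nat set \<Rightarrow> real) \<Rightarrow> nat set \<Rightarrow> nat set \<Rightarrow> real" where
  "marginal v T S = v (S \<union> T) - v S"

definition price_sum :: "(nat \<Rightarrow> real) \<Rightarrow> nat set \<Rightarrow> real" where
  "price_sum p S = (\<Sum>j\<in>S. p j)"

definition nonneg_prices :: "nat \<Rightarrow> (nat \<Rightarrow> real) \<Rightarrow> bool" where
  "nonneg_prices n p \<longleftrightarrow> (\<forall>j\<in>ground n. p j \<ge> 0)"

definition demand :: "nat \<Rightarrow> (nat set \<Rightarrow> real) \<Rightarrow> (nat \<Rightarrow> real) \<Rightarrow> nat set set" where
  "demand n v p = {S. S \<subseteq> ground n \<and>
      (\<forall>T. T \<subseteq> ground n \<longrightarrow> v T - price_sum p T \<le> v S - price_sum p S)}"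

definition decision_map :: "nat \<Rightarrow> (nat set \<Rightarrow> real) \<Rightarrow> ((nat \<Rightarrow> real) \<Rightarrow> nat set) \<Rightarrow> bool" where
  "decision_map n v X \<longleftrightarrow> (\<forall>p. nonneg_prices n p \<longrightarrow> X p \<in> demand n v p)"

definition seller_utility :: "((nat \<Rightarrow> real) \<Rightarrow> nat set) \<Rightarrow> (nat \<Rightarrow> real) \<Rightarrow> nat \<Rightarrow> real" where
  "seller_utility X p i = (if i \<in> X p then p i else 0)"

definition pure_NE :: "nat \<Rightarrow> ((nat \<Rightarrow> real) \<Rightarrow> nat set) \<Rightarrow> (nat \<Rightarrow> real) \<Rightarrow> bool" where
  "pure_NE n X p \<longleftrightarrow> nonneg_prices n p \<and>
     (\<forall>i\<in>ground n. \<forall>q::real. q \<ge> 0 \<longrightarrow>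
        seller_utility X p i \<ge> seller_utility X (p(i := q)) i)"

end

theory Submission
  imports Defs
begin

lemma ps_remove: "finite T \<Longrightarrow> j \<in> T \<Longrightarrow> price_sum p T = price_sum p (T - {j}) + p j"
  unfolding price_sum_def by (simp add: sum.remove)

lemma ps_upd_notin: "j \<notin> T \<Longrightarrow> price_sum (p(j:=q)) T = price_sum p T"
  unfolding price_sum_def by (rule sum.cong) auto

lemma ps_upd_in: "finite T \<Longrightarrow> j \<in> T \<Longrightarrow> price_sum (p(j:=q)) T = price_sum p (T - {j}) + q"
proof -
  assume a: "finite T" "j \<in> T"
  have "price_sum (p(j:=q)) T = price_sum (p(j:=q)) (T - {j}) + (p(j:=q)) j"
    using ps_remove[OF a] by blast
  also have "price_sum (p(j:=q)) (T - {j}) = price_sum p (T - {j})"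
    by (rule ps_upd_notin) simp
  finally show ?thesis by (simp only: fun_upd_same)
qed

lemma ps_modular: "finite A \<Longrightarrow> finite B \<Longrightarrow>
   price_sum p (A \<union> B) + price_sum p (A \<inter> B) = price_sum p A + price_sum p B"
  unfolding price_sum_def by (rule sum.union_inter)

lemma finite_ground: "finite (ground n)" unfolding ground_def by simp

lemma opt_between:
  assumes sub: "submodular_val n v"
    and A: "C \<subseteq> ground n" and B: "C' \<subseteq> ground n"
    and UA: "v (C \<union> C') - price_sum p (C \<union> C') = W" and UB: "v (C \<inter> C') - price_sum p (C \<inter> C') = W"
    and opt: "\<forall>T. T \<subseteq> ground n \<longrightarrow> v T - price_sum p T \<le> W"
  shows "v C - price_sum p C = W"
proof -
  have fA: "finite C" and fB: "finite C'" using A B finite_ground finite_subset by blast+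
  have s: "v (C \<union> C') + v (C \<inter> C') \<le> v C + v C'" using sub A B unfolding submodular_val_def by blast
  have m: "price_sum p (C \<union> C') + price_sum p (C \<inter> C') = price_sum p C + price_sum p C'"
    using ps_modular[OF fA fB] .
  have o1: "v C - price_sum p C \<le> W" using opt A by auto
  have o2: "v C' - price_sum p C' \<le> W" using opt B by auto
  show ?thesis using s m o1 o2 UA UB by linarith
qed

lemma chain:
  assumes sub: "submodular_val n v" and fC: "finite C"
    and A: "A \<subseteq> ground n" and C: "C \<subseteq> ground n"
    and z: "\<forall>j\<in>C. v (A \<union> {j}) \<le> v A"
  shows "v (A \<union> C) \<le> v A"
  using fC C z
proof (induction C rule: finite_induct)
  case empty then show ?case by simp
next
  case (insert j C)
  have s: "v ((A \<union> C) \<union> (A \<union> {j})) + v ((A \<union> C) \<inter> (A \<union> {j})) \<le> v (A \<union> C) + v (A \<union> {j})"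
  proof -
    have "A \<union> C \<subseteq> ground n" "A \<union> {j} \<subseteq> ground n" using A insert.prems by auto
    then show ?thesis using sub unfolding submodular_val_def by blast
  qed
  have e1: "(A \<union> C) \<union> (A \<union> {j}) = A \<union> insert j C" by blast
  have e2: "(A \<union> C) \<inter> (A \<union> {j}) = A" using insert.hyps(2) by blast
  have ih: "v (A \<union> C) \<le> v A" using insert by auto
  have zj: "v (A \<union> {j}) \<le> v A" using insert.prems by auto
  show ?case using s e1 e2 ih zj by simp
qed

theorem mainTheorem6:
  fixes n :: nat and v :: "nat set \<Rightarrow> real" and X :: "(nat \<Rightarrow> real) \<Rightarrow> nat set"
    and p :: "nat \<Rightarrow> real"
  assumes "valuation n v" and "monotone_val n v" and "submodular_val n v"
    and "decision_map n v X"
    and "pure_NE n X p"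
  shows "(\<forall>i\<in>ground n. seller_utility X p i = marginal v {i} (ground n - {i}))
       \<and> (\<forall>i\<in>ground n. marginal v {i} (ground n - {i}) > 0 \<longrightarrow>
            p i = marginal v {i} (ground n - {i}) \<and> i \<in> X p)"
proof -
  define N where "N = ground n"
  have finN: "finite N" unfolding N_def by (rule finite_ground)
  have pnn: "nonneg_prices n p" using assms(5) unfolding pure_NE_def by blast
  have NE: "\<forall>i\<in>N. \<forall>q::real. q \<ge> 0 \<longrightarrow> seller_utility X p i \<ge> seller_utility X (p(i := q)) i"
    using assms(5) unfolding pure_NE_def N_def by blast
  have dem: "\<And>p'. nonneg_prices n p' \<Longrightarrow> X p' \<subseteq> N \<and>
      (\<forall>T. T \<subseteq> N \<longrightarrow> v T - price_sum p' T \<le> v (X p') - price_sum p' (X p'))"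
    using assms(4) unfolding decision_map_def demand_def N_def by blast
  have upd: "\<And>i q. q \<ge> 0 \<Longrightarrow> nonneg_prices n (p(i:=q))"
    using pnn unfolding nonneg_prices_def by auto
  define S where "S = X p"
  define W where "W = v S - price_sum p S"
  have SN: "S \<subseteq> N" and Sopt: "\<forall>T. T \<subseteq> N \<longrightarrow> v T - price_sum p T \<le> W"
    using dem[OF pnn] unfolding S_def W_def by auto
  have mon: "\<And>A B. A \<subseteq> B \<Longrightarrow> B \<subseteq> N \<Longrightarrow> v A \<le> v B"
    using assms(2) unfolding monotone_val_def N_def by blast
  have sub: "\<And>A B. A \<subseteq> N \<Longrightarrow> B \<subseteq> N \<Longrightarrow> v (A \<union> B) + v (A \<inter> B) \<le> v A + v B"
    using assms(3) unfolding submodular_val_def N_def by blast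
  have marg: "\<And>i. i \<in> N \<Longrightarrow> marginal v {i} (N - {i}) = v N - v (N - {i})"
  proof -
    fix i assume "i \<in> N"
    then have "N - {i} \<union> {i} = N" by blast
    then show "marginal v {i} (N - {i}) = v N - v (N - {i})" unfolding marginal_def by simp
  qed
  have mnn: "\<And>i. i \<in> N \<Longrightarrow> marginal v {i} (N - {i}) \<ge> 0"
    using marg mon by fastforce
  have unn: "\<And>i. i \<in> N \<Longrightarrow> seller_utility X p i \<ge> 0"
    using pnn unfolding seller_utility_def nonneg_prices_def N_def by auto
  have Bj: "\<And>j R. j \<in> N \<Longrightarrow> j \<notin> S \<Longrightarrow> R \<subseteq> N \<Longrightarrow> j \<notin> R \<Longrightarrow>
      v (R \<union> {j}) - price_sum p R \<le> W"
  proof (rule ccontr)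
    fix j R assume jN: "j \<in> N" and jS: "j \<notin> S" and RN: "R \<subseteq> N" and jR: "j \<notin> R"
      and c: "\<not> v (R \<union> {j}) - price_sum p R \<le> W"
    have u0: "seller_utility X p j = 0" using jS unfolding S_def seller_utility_def by simp
    define q where "q = (v (R \<union> {j}) - price_sum p R - W) / 2"
    have q0: "q > 0" using c q_def by simp
    define T where "T = X (p(j:=q))"
    have TN: "T \<subseteq> N" and Topt: "\<forall>R. R \<subseteq> N \<longrightarrow> v R - price_sum (p(j:=q)) R \<le> v T - price_sum (p(j:=q)) T"
      using dem[OF upd] q0 unfolding T_def by auto
    show False
    proof (cases "j \<in> T")
      case True
      then have "seller_utility X (p(j:=q)) j = q" unfolding seller_utility_def T_def by simp
      moreover have "seller_utility X (p(j:=q)) j \<le> seller_utility X p j" using NE jN q0 by simp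
      ultimately show False using q0 u0 by simp
    next
      case False
      have a: "v T - price_sum (p(j:=q)) T \<le> W" using Sopt TN ps_upd_notin False by metis
      have R: "R \<union> {j} \<subseteq> N" using RN jN by blast
      have fR: "finite (R \<union> {j})" using RN finN finite_subset by auto
      have b: "v (R \<union> {j}) - price_sum (p(j:=q)) (R \<union> {j}) \<le> v T - price_sum (p(j:=q)) T"
        using Topt R by blast
      have e: "(R \<union> {j}) - {j} = R" using jR by blast
      have c: "price_sum (p(j:=q)) (R \<union> {j}) = price_sum p R + q"
        using ps_upd_in[OF fR, of j p q] e by simp
      have "v (R \<union> {j}) - price_sum p R - q \<le> W" using a b c by linarith
      then show False using q_def q0 by (simp add: field_simps)
    qed
  qed
  have lower: "\<And>i. i \<in> N \<Longrightarrow> seller_utility X p i \<ge> marginal v {i} (N - {i})"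
  proof (rule ccontr)
    fix i assume iN: "i \<in> N" and c: "\<not> seller_utility X p i \<ge> marginal v {i} (N - {i})"
    define u where "u = seller_utility X p i"
    define m where "m = marginal v {i} (N - {i})"
    have u0: "u \<ge> 0" using unn[OF iN] u_def by simp
    have um: "u < m" using c u_def m_def by simp
    define q where "q = (u + m) / 2"
    have q0: "q \<ge> 0" and qu: "q > u" and qm: "q < m" using u0 um q_def by auto
    define T where "T = X (p(i:=q))"
    have TN: "T \<subseteq> N" and Topt: "\<forall>R. R \<subseteq> N \<longrightarrow> v R - price_sum (p(i:=q)) R \<le> v T - price_sum (p(i:=q)) T"
      using dem[OF upd[OF q0]] unfolding T_def by auto
    show False
    proof (cases "i \<in> T")
      case True
      then have "seller_utility X (p(i:=q)) i = q" unfolding seller_utility_def T_def by simp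
      then show False using NE iN q0 qu u_def by force
    next
      case False
      have fT: "finite T" using TN finN finite_subset by blast
      have "T \<union> {i} \<subseteq> N" using TN iN by blast
      then have "v (T \<union> {i}) - price_sum (p(i:=q)) (T \<union> {i}) \<le> v T - price_sum (p(i:=q)) T"
        using Topt by blast
      moreover have "price_sum (p(i:=q)) (T \<union> {i}) = price_sum p T + q"
        using ps_upd_in[of "T \<union> {i}" i p q] fT False by simp
      moreover have "price_sum (p(i:=q)) T = price_sum p T" using ps_upd_notin False by metis
      ultimately have a: "v (T \<union> {i}) - v T \<le> q" by simp
      have s: "v ((T \<union> {i}) \<union> (N - {i})) + v ((T \<union> {i}) \<inter> (N - {i})) \<le> v (T \<union> {i}) + v (N - {i})"
        using sub[of "T \<union> {i}" "N - {i}"] TN iN by blast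
      have e1: "(T \<union> {i}) \<union> (N - {i}) = N" using TN iN by blast
      have e2: "(T \<union> {i}) \<inter> (N - {i}) = T" using TN False by blast
      have "m = v N - v (N - {i})" using marg[OF iN] m_def by simp
      then show False using s e1 e2 a qm by simp
    qed
  qed
  have upper: "\<And>i. i \<in> N \<Longrightarrow> i \<in> S \<Longrightarrow> p i \<le> marginal v {i} (N - {i})"
  proof -
    fix i assume iN: "i \<in> N" and iS: "i \<in> S"
    have uS: "seller_utility X p i = p i" using iS unfolding S_def seller_utility_def by simp
    define F where "F = {T. T \<subseteq> N \<and> i \<notin> T}"
    have finF: "finite F" unfolding F_def using finN by (auto intro: finite_subset[of _ "Pow N"])
    have neF: "F \<noteq> {}" unfolding F_def by auto
    define Wi where "Wi = Max ((\<lambda>T. v T - price_sum p T) ` F)"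
    obtain T0 where T0F: "T0 \<in> F" and T0W: "v T0 - price_sum p T0 = Wi"
    proof -
      have "Wi \<in> (\<lambda>T. v T - price_sum p T) ` F"
        using Max_in[of "(\<lambda>T. v T - price_sum p T) ` F"] finF neF unfolding Wi_def by simp
      then show ?thesis using that by blast
    qed
    have Wimax: "\<And>T. T \<in> F \<Longrightarrow> v T - price_sum p T \<le> Wi"
      unfolding Wi_def using finF by simp
    have T0N: "T0 \<subseteq> N" and iT0: "i \<notin> T0" using T0F F_def by auto
    have WiW: "Wi \<le> W" using Sopt T0N T0W by auto
    have T0opt: "v T0 - price_sum p T0 = W"
    proof (rule ccontr)
      assume "v T0 - price_sum p T0 \<noteq> W"
      then have lt: "Wi < W" using WiW T0W by simp
      define q where "q = p i + (W - Wi) / 2"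
      have pi0: "p i \<ge> 0" using pnn iN unfolding nonneg_prices_def N_def by auto
      have q0: "q \<ge> 0" using q_def lt pi0 by simp
      define T where "T = X (p(i:=q))"
      have TN: "T \<subseteq> N" and Topt: "\<forall>R. R \<subseteq> N \<longrightarrow> v R - price_sum (p(i:=q)) R \<le> v T - price_sum (p(i:=q)) T"
        using dem[OF upd[OF q0]] unfolding T_def by auto
      show False
      proof (cases "i \<in> T")
        case True
        then have "seller_utility X (p(i:=q)) i = q" unfolding seller_utility_def T_def by simp
        then show False using NE iN q0 uS q_def lt by force
      next
        case False
        have fS: "finite S" using SN finN finite_subset by blast
        have "T \<in> F" using TN False F_def by simp
        then have a: "v T - price_sum (p(i:=q)) T \<le> Wi" using Wimax ps_upd_notin False by metis
        have b: "v S - price_sum (p(i:=q)) S \<le> v T - price_sum (p(i:=q)) T" using Topt SN by blast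
        have c: "price_sum (p(i:=q)) S = price_sum p (S - {i}) + q" using ps_upd_in fS iS by metis
        have d: "price_sum p S = price_sum p (S - {i}) + p i" using ps_remove fS iS by metis
        have "W - (q - p i) \<le> Wi" using a b c d W_def by linarith
        then show False using q_def lt by (simp add: field_simps)
      qed
    qed
    have pz: "\<forall>j\<in>T0 - S. p j = 0"
    proof
      fix j assume j: "j \<in> T0 - S"
      have fT: "finite T0" using T0N finN finite_subset by blast
      have "v ((T0 - {j}) \<union> {j}) - price_sum p (T0 - {j}) \<le> W"
        using Bj[of j "T0 - {j}"] j T0N by blast
      moreover have "(T0 - {j}) \<union> {j} = T0" using j by blast
      moreover have "price_sum p T0 = price_sum p (T0 - {j}) + p j" using ps_remove fT j by blast
      moreover have "p j \<ge> 0" using pnn j T0N unfolding nonneg_prices_def N_def by auto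
      ultimately show "p j = 0" using T0opt by simp
    qed
    define B where "B = S \<union> T0"
    have BN: "B \<subseteq> N" using SN T0N B_def by blast
    have BW: "v B - price_sum p B = W"
    proof -
      have fS: "finite S" using SN finN finite_subset by blast
      have fT: "finite (T0 - S)" using T0N finN finite_subset by blast
      have e: "B = S \<union> (T0 - S)" using B_def by blast
      have "price_sum p B = price_sum p S + price_sum p (T0 - S)"
        unfolding e price_sum_def by (rule sum.union_disjoint[OF fS fT]) blast
      moreover have "price_sum p (T0 - S) = 0" unfolding price_sum_def using pz by simp
      moreover have "v B \<le> v S"
      proof -
        have "v (S \<union> (T0 - S)) \<le> v S"
        proof -
          have "\<forall>j\<in>T0 - S. v (S \<union> {j}) \<le> v S"
          proof
            fix j assume j: "j \<in> T0 - S"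
            have "v (S \<union> {j}) - price_sum p S \<le> W" using Bj[of j S] j T0N SN by blast
            then show "v (S \<union> {j}) \<le> v S" using W_def by simp
          qed
          moreover have "S \<subseteq> ground n" "T0 - S \<subseteq> ground n" using SN T0N N_def by auto
          ultimately show ?thesis using chain[OF assms(3) fT, of S] by blast
        qed
        then show ?thesis using e by simp
      qed
      moreover have "v S \<le> v B" using mon BN B_def by blast
      ultimately show ?thesis using W_def by simp
    qed
    have Bi: "v (B - {i}) - price_sum p (B - {i}) = W"
    proof -
      have e1: "(B - {i}) \<union> (T0 \<union> {i}) = B" using iS B_def by blast
      have e2: "(B - {i}) \<inter> (T0 \<union> {i}) = T0" using iT0 B_def by blast
      show ?thesis
        using opt_between[OF assms(3), of "B - {i}" "T0 \<union> {i}" p W] e1 e2 BW T0opt BN T0N iN Sopt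
        unfolding N_def by auto
    qed
    have fB: "finite B" using BN finN finite_subset by blast
    have iB: "i \<in> B" using iS B_def by simp
    have pi: "p i = v B - v (B - {i})" using BW Bi ps_remove[OF fB iB, of p] by simp
    have zero: "\<forall>j\<in>N - B. v ((B - {i}) \<union> {j}) \<le> v (B - {i})"
    proof
      fix j assume jNB: "j \<in> N - B"
      have "v ((B - {i}) \<union> {j}) - price_sum p (B - {i}) \<le> W"
        using Bj[of j "B - {i}"] jNB BN B_def by blast
      then show "v ((B - {i}) \<union> {j}) \<le> v (B - {i})" using Bi by simp
    qed
    have ch: "v ((B - {i}) \<union> (N - B)) \<le> v (B - {i})"
      using chain[OF assms(3), of "N - B" "B - {i}"] zero finN BN unfolding N_def by auto
    have eN: "(B - {i}) \<union> (N - B) = N - {i}" using BN iB by blast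
    have vB: "v B \<le> v N" using mon BN by blast
    show "p i \<le> marginal v {i} (N - {i})" using marg[OF iN] ch eN vB pi by simp
  qed
  have main: "\<And>i. i \<in> N \<Longrightarrow> seller_utility X p i = marginal v {i} (N - {i})"
  proof -
    fix i assume iN: "i \<in> N"
    show "seller_utility X p i = marginal v {i} (N - {i})"
    proof (cases "i \<in> S")
      case True
      then show ?thesis using upper[OF iN True] lower[OF iN]
        unfolding seller_utility_def S_def by simp
    next
      case False
      then show ?thesis using lower[OF iN] mnn[OF iN]
        unfolding seller_utility_def S_def by simp
    qed
  qed
  show ?thesis
  proof (intro conjI ballI impI)
    fix i assume "i \<in> ground n" then show "seller_utility X p i = marginal v {i} (ground n - {i})"
      using main N_def by simp
  next
    fix i assume iN: "i \<in> ground n" and pos: "marginal v {i} (ground n - {i}) > 0"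
    have "seller_utility X p i > 0" using main iN pos N_def by simp
    then show "i \<in> X p" unfolding seller_utility_def by (auto split: if_splits)
  next
    fix i assume iN: "i \<in> ground n" and pos: "marginal v {i} (ground n - {i}) > 0"
    have "seller_utility X p i > 0" using main iN pos N_def by simp
    then have "i \<in> X p" unfolding seller_utility_def by (auto split: if_splits)
    then show "p i = marginal v {i} (ground n - {i})"
    proof -
      have "seller_utility X p i = p i" using \<open>i \<in> X p\<close> unfolding seller_utility_def by simp
      moreover have "seller_utility X p i = marginal v {i} (N - {i})" using main iN N_def by simp
      ultimately show ?thesis using N_def by simp
    qed
  qed
qed

end
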